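(* Let $n, q$ be positive integers, let $\mathcal{A} = \langle V, V_0, V_1, E\rangle$ be an arena (over some set of colors $C$) with $n$ nodes, let $U \subseteq V$, and let $S_1$ be a $q$-state strategy of Player 0 in $\mathcal{A}$. Then there exists a chromatic $(q+1)^n$-state strategy $S_2$ of Player 0 in $\mathcal{A}$ such that $\mathsf{col}(S_2, U) \subseteq \mathsf{col}(S_1, U)$.
   Context: An arena over a set of colors $C$ is a tuple $\mathcal{A} = \langle V, V_0, V_1, E\rangle$ of finite sets with $V = V_0 \sqcup V_1$, $E \subseteq V \times C \times V$, and every node having at least one outgoing edge; for $e=(s,c,t)$ write $\mathsf{source}(e)=s$, $\mathsf{col}(e)=c$, $\mathsf{target}(e)=t$. A path is a nonempty finite or infinite sequence of edges $e_1e_2\ldots$ with $\mathsf{target}(e_i)=\mathsf{source}(e_{i+1})$; for each node $v$ there is also a $0$-length path $\lambda_v$ with source and target $v$. $\mathsf{col}$ extends letterwise to sequences of edges. A strategy of Player 0 is a function $S$ assigning to each finite path $p$ with $\mathsf{target}(p)\in V_0$ an edge $S(p)$ with $\mathsf{source}(S(p))=\mathsf{target}(p)$. A path $p=e_1e_2\ldots$ is consistent with $S$ if (when $\mathsf{source}(p)\in V_0$) $e_1=S(\lambda_{\mathsf{source}(p)})$ and for each $1\le i<|p|$ with $\mathsf{target}(e_i)\in V_0$ we have $e_{i+1}=S(e_1\ldots e_i)$; $0$-length paths are always consistent. For $v\in V$, $\mathsf{col}(S,v)\subseteq C^\omega$ is the set of $\mathsf{col}(p)$ over all infinite paths $p$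 from $v$ consistent with $S$, and $\mathsf{col}(S,U)=\bigcup_{v\in U}\mathsf{col}(S,v)$. A memory structure is $\mathcal{M}=\langle M, m_{init},\delta\rangle$ with $M$ finite, $m_{init}\in M$, $\delta: M\times E\to M$ (extended to finite edge sequences in the usual way). $S$ is an $\mathcal{M}$-strategy if for all finite paths $p_1,p_2$ with $\mathsf{target}(p_1)=\mathsf{target}(p_2)\in V_0$, $\delta(m_{init},p_1)=\delta(m_{init},p_2)$ implies $S(p_1)=S(p_2)$. $\mathcal{M}$ is chromatic if there is $\sigma: M\times C\to M$ with $\delta(m,e)=\sigma(m,\mathsf{col}(e))$ for all $m,e$. A (chromatic) $q$-state strategy is an $\mathcal{M}$-strategy for some (chromatic) memory structure $\mathcal{M}$ with $|M|=q$. *)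

theory Defs
  imports Main
begin

type_synonym ('v,'c) edge = "'v \<times> 'c \<times> 'v"

definition src :: "('v,'c) edge \<Rightarrow> 'v" where "src e = fst e"
definition col :: "('v,'c) edge \<Rightarrow> 'c" where "col e = fst (snd e)"
definition tgt :: "('v,'c) edge \<Rightarrow> 'v" where "tgt e = snd (snd e)"

definition arena :: "'c set \<Rightarrow> 'v set \<Rightarrow> 'v set \<Rightarrow> 'v set \<Rightarrow> ('v,'c) edge set \<Rightarrow> bool" where
  "arena C V V0 V1 E \<longleftrightarrow> finite V \<and> finite E \<and> V0 \<union> V1 = V \<and> V0 \<inter> V1 = {} \<and>
     E \<subseteq> V \<times> C \<times> V \<and> (\<forall>v\<in>V. \<exists>e\<in>E. src e = v)"

text \<open>A finite path is represented as a pair (v, es): its source node v and its list of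
  edges es (the empty list gives the 0-length path at v).\<close>
fun chain_from :: "'v \<Rightarrow> ('v,'c) edge list \<Rightarrow> bool" where
  "chain_from v [] = True"
| "chain_from v (e # es) = (src e = v \<and> chain_from (tgt e) es)"

fun pend :: "'v \<Rightarrow> ('v,'c) edge list \<Rightarrow> 'v" where
  "pend v [] = v"
| "pend v (e # es) = pend (tgt e) es"

definition fin_path :: "'v set \<Rightarrow> ('v,'c) edge set \<Rightarrow> 'v \<times> ('v,'c) edge list \<Rightarrow> bool" where
  "fin_path V E p \<longleftrightarrow> fst p \<in> V \<and> set (snd p) \<subseteq> E \<and> chain_from (fst p) (snd p)"

definition ptarget :: "'v \<times> ('v,'c) edge list \<Rightarrow> 'v" where
  "ptarget p = pend (fst p) (snd p)"

text \<open>A strategy of Player 0: to every finite path ending in V0 it assigns an edge leaving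
  the target (values on other arguments are irrelevant).\<close>
definition strategy :: "'v set \<Rightarrow> 'v set \<Rightarrow> ('v,'c) edge set
    \<Rightarrow> ('v \<times> ('v,'c) edge list \<Rightarrow> ('v,'c) edge) \<Rightarrow> bool" where
  "strategy V V0 E S \<longleftrightarrow> (\<forall>p. fin_path V E p \<and> ptarget p \<in> V0 \<longrightarrow> S p \<in> E \<and> src (S p) = ptarget p)"

definition consistent_inf :: "'v set \<Rightarrow> ('v,'c) edge set
    \<Rightarrow> ('v \<times> ('v,'c) edge list \<Rightarrow> ('v,'c) edge) \<Rightarrow> 'v \<Rightarrow> (nat \<Rightarrow> ('v,'c) edge) \<Rightarrow> bool" where
  "consistent_inf V0 E S v \<rho> \<longleftrightarrow>
     (\<forall>i. \<rho> i \<in> E) \<and> src (\<rho> 0) = v \<and> (\<forall>i. tgt (\<rho> i) = src (\<rho> (Suc i))) \<and>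
     (v \<in> V0 \<longrightarrow> \<rho> 0 = S (v, [])) \<and>
     (\<forall>i. tgt (\<rho> i) \<in> V0 \<longrightarrow> \<rho> (Suc i) = S (v, map \<rho> [0..<Suc i]))"

definition col_S :: "'v set \<Rightarrow> ('v,'c) edge set
    \<Rightarrow> ('v \<times> ('v,'c) edge list \<Rightarrow> ('v,'c) edge) \<Rightarrow> 'v set \<Rightarrow> (nat \<Rightarrow> 'c) set" where
  "col_S V0 E S U = (\<Union>v\<in>U. {(\<lambda>i. col (\<rho> i)) | \<rho>. consistent_inf V0 E S v \<rho>})"

definition memory :: "('v,'c) edge set \<Rightarrow> 'm set \<Rightarrow> 'm \<Rightarrow> ('m \<Rightarrow> ('v,'c) edge \<Rightarrow> 'm) \<Rightarrow> bool" where
  "memory E M m0 \<delta> \<longleftrightarrow> finite M \<and> m0 \<in> M \<and> (\<forall>m\<in>M. \<forall>e\<in>E. \<delta> m e \<in> M)"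

definition M_strategy :: "'v set \<Rightarrow> 'v set \<Rightarrow> ('v,'c) edge set \<Rightarrow> 'm \<Rightarrow> ('m \<Rightarrow> ('v,'c) edge \<Rightarrow> 'm)
    \<Rightarrow> ('v \<times> ('v,'c) edge list \<Rightarrow> ('v,'c) edge) \<Rightarrow> bool" where
  "M_strategy V V0 E m0 \<delta> S \<longleftrightarrow>
     (\<forall>p1 p2. fin_path V E p1 \<and> fin_path V E p2 \<and> ptarget p1 = ptarget p2 \<and> ptarget p1 \<in> V0 \<and>
        foldl \<delta> m0 (snd p1) = foldl \<delta> m0 (snd p2) \<longrightarrow> S p1 = S p2)"

definition chromatic :: "'c set \<Rightarrow> ('v,'c) edge set \<Rightarrow> 'm set \<Rightarrow> ('m \<Rightarrow> ('v,'c) edge \<Rightarrow> 'm) \<Rightarrow> bool" where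
  "chromatic C E M \<delta> \<longleftrightarrow> (\<exists>\<sigma>. (\<forall>m\<in>M. \<forall>c\<in>C. \<sigma> m c \<in> M) \<and> (\<forall>m\<in>M. \<forall>e\<in>E. \<delta> m e = \<sigma> m (col e)))"

end

theory Submission
  imports Defs "HOL-Library.FuncSet"
begin

lemma chain_from_append: "chain_from v (xs @ ys) = (chain_from v xs \<and> chain_from (pend v xs) ys)"
  by (induction xs arbitrary: v) auto

lemma pend_append: "pend v (xs @ ys) = pend (pend v xs) ys"
  by (induction xs arbitrary: v) auto

lemma pigeon_bound:
  fixes X :: "'a set" and Q :: "'a \<Rightarrow> nat \<Rightarrow> bool"
  assumes fin: "finite X" and ex: "\<And>k. k \<ge> j \<Longrightarrow> \<exists>x\<in>X. Q x k"
    and mono: "\<And>x k k'. Q x k' \<Longrightarrow> j \<le> k \<Longrightarrow> k \<le> k' \<Longrightarrow> Q x k"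
  shows "\<exists>x\<in>X. \<forall>k\<ge>j. Q x k"
proof (rule ccontr)
  assume "\<not> ?thesis"
  then have "\<forall>x\<in>X. \<exists>k. k \<ge> j \<and> \<not> Q x k" by blast
  then obtain kx where kx: "\<And>x. x \<in> X \<Longrightarrow> kx x \<ge> j \<and> \<not> Q x (kx x)" by metis
  define K where "K = Max (insert j (kx ` X))"
  have fK: "finite (insert j (kx ` X))" using fin by simp
  have "K \<ge> j" unfolding K_def using fK by simp
  then obtain x where x: "x \<in> X" "Q x K" using ex by blast
  have "kx x \<le> K" unfolding K_def using fK x(1) by simp
  then have "Q x (kx x)" using mono[OF x(2)] kx[OF x(1)] by blast
  then show False using kx[OF x(1)] by blast
qed

locale gctx =
  fixes C :: "'c set" and V V0 V1 :: "'v set" and E :: "('v,'c) edge set"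
    and U :: "'v set"
    and S1 :: "'v \<times> ('v,'c) edge list \<Rightarrow> ('v,'c) edge"
    and M1 :: "'m set" and m1 :: 'm and \<delta>1 :: "'m \<Rightarrow> ('v,'c) edge \<Rightarrow> 'm"
  assumes ar: "arena C V V0 V1 E"
    and UV: "U \<subseteq> V"
    and st1: "strategy V V0 E S1"
    and mem1: "memory E M1 m1 \<delta>1" and ms1: "M_strategy V V0 E m1 \<delta>1 S1"
begin

definition arb :: "'v \<Rightarrow> ('v,'c) edge" where
  "arb v = (SOME e. e \<in> E \<and> src e = v)"

definition mv :: "'v \<Rightarrow> 'm \<Rightarrow> ('v,'c) edge" where
  "mv v m = (if \<exists>p. fin_path V E p \<and> ptarget p = v \<and> foldl \<delta>1 m1 (snd p) = m
     then S1 (SOME p. fin_path V E p \<and> ptarget p = v \<and> foldl \<delta>1 m1 (snd p) = m) else arb v)"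

definition allowed :: "('v \<Rightarrow> 'm option) \<Rightarrow> ('v,'c) edge \<Rightarrow> bool" where
  "allowed f e \<longleftrightarrow> e \<in> E \<and> (\<exists>m. f (src e) = Some m \<and> (src e \<in> V0 \<longrightarrow> e = mv (src e) m))"

definition par :: "('v \<Rightarrow> 'm option) \<Rightarrow> 'c \<Rightarrow> 'v \<Rightarrow> ('v,'c) edge" where
  "par f c u = (SOME e. allowed f e \<and> col e = c \<and> tgt e = u)"

definition sig :: "('v \<Rightarrow> 'm option) \<Rightarrow> 'c \<Rightarrow> 'v \<Rightarrow> 'm option" where
  "sig f c u = (if \<exists>e. allowed f e \<and> col e = c \<and> tgt e = u
     then Some (\<delta>1 (the (f (src (par f c u)))) (par f c u)) else None)"

definition g :: "'v \<Rightarrow> ('v \<Rightarrow> 'm option) \<Rightarrow> ('v,'c) edge" where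
  "g v f = (case f v of Some m \<Rightarrow> mv v m | None \<Rightarrow> arb v)"

definition f0 :: "'v \<Rightarrow> 'm option" where
  "f0 u = (if u \<in> U then Some m1 else None)"

definition Fam :: "('v \<Rightarrow> 'm option) set" where
  "Fam = {f. \<forall>u. (u \<in> V \<longrightarrow> f u \<in> insert None (Some ` M1)) \<and> (u \<notin> V \<longrightarrow> f u = None)}"

primrec Fs :: "(nat \<Rightarrow> 'c) \<Rightarrow> nat \<Rightarrow> 'v \<Rightarrow> 'm option" where
  "Fs c 0 = f0"
| "Fs c (Suc k) = sig (Fs c k) (c k)"

definition P :: "(nat \<Rightarrow> 'c) \<Rightarrow> nat \<Rightarrow> 'v \<Rightarrow> 'v" where
  "P c k x = src (par (Fs c k) (c k) x)"

lemma finV: "finite V" and finE: "finite E" and V0V: "V0 \<subseteq> V"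
  and EV: "E \<subseteq> V \<times> C \<times> V" and outE: "\<And>v. v \<in> V \<Longrightarrow> \<exists>e\<in>E. src e = v"
  using ar unfolding arena_def by auto

lemma tgtV: "e \<in> E \<Longrightarrow> tgt e \<in> V"
  using EV unfolding tgt_def by auto
lemma srcV: "e \<in> E \<Longrightarrow> src e \<in> V"
  using EV unfolding src_def by auto

lemma arb: "v \<in> V \<Longrightarrow> arb v \<in> E \<and> src (arb v) = v"
  unfolding arb_def using outE[of v] by (metis (mono_tags, lifting) someI_ex)

lemma mv_valid: "v \<in> V0 \<Longrightarrow> mv v m \<in> E \<and> src (mv v m) = v"
proof -
  assume v: "v \<in> V0"
  show ?thesis
  proof (cases "\<exists>p. fin_path V E p \<and> ptarget p = v \<and> foldl \<delta>1 m1 (snd p) = m")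
    case True
    let ?p = "SOME p. fin_path V E p \<and> ptarget p = v \<and> foldl \<delta>1 m1 (snd p) = m"
    have pp: "fin_path V E ?p \<and> ptarget ?p = v \<and> foldl \<delta>1 m1 (snd ?p) = m"
      using someI_ex[OF True] .
    have "S1 ?p \<in> E \<and> src (S1 ?p) = ptarget ?p" using st1 pp v unfolding strategy_def by (metis (no_types, lifting))
    moreover have "mv v m = S1 ?p" using True unfolding mv_def by simp
    ultimately show ?thesis using pp by simp
  next
    case False
    then show ?thesis using arb[of v] v V0V unfolding mv_def by auto
  qed
qed

lemma msI: "fin_path V E p1 \<and> fin_path V E p2 \<and> ptarget p1 = ptarget p2 \<and> ptarget p1 \<in> V0 \<and>
    foldl \<delta>1 m1 (snd p1) = foldl \<delta>1 m1 (snd p2) \<Longrightarrow> S1 p1 = S1 p2"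
  using ms1 unfolding M_strategy_def by blast

lemma mv_eq: "fin_path V E p \<Longrightarrow> ptarget p \<in> V0 \<Longrightarrow> mv (ptarget p) (foldl \<delta>1 m1 (snd p)) = S1 p"
proof -
  assume p: "fin_path V E p" "ptarget p \<in> V0"
  let ?Q = "\<lambda>p'. fin_path V E p' \<and> ptarget p' = ptarget p \<and> foldl \<delta>1 m1 (snd p') = foldl \<delta>1 m1 (snd p)"
  have ex: "\<exists>p'. ?Q p'" using p by blast
  have "?Q (SOME p'. ?Q p')" using someI_ex[OF ex] .
  then have q: "fin_path V E (SOME p'. ?Q p') \<and> fin_path V E p \<and> ptarget (SOME p'. ?Q p') = ptarget p \<and>
     ptarget (SOME p'. ?Q p') \<in> V0 \<and> foldl \<delta>1 m1 (snd (SOME p'. ?Q p')) = foldl \<delta>1 m1 (snd p)"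
    using p by simp
  have "S1 (SOME p'. ?Q p') = S1 p" using msI q by blast
  then show ?thesis using ex unfolding mv_def by simp
qed

lemma g_valid: "v \<in> V0 \<Longrightarrow> g v f \<in> E \<and> src (g v f) = v"
  unfolding g_def using mv_valid arb V0V by (auto split: option.split)

lemma par_ok:
  assumes "sig f c u \<noteq> None"
  shows "allowed f (par f c u) \<and> col (par f c u) = c \<and> tgt (par f c u) = u \<and>
         sig f c u = Some (\<delta>1 (the (f (src (par f c u)))) (par f c u))"
proof -
  have ex: "\<exists>e. allowed f e \<and> col e = c \<and> tgt e = u"
    using assms unfolding sig_def by meson
  show ?thesis using someI_ex[OF ex] ex unfolding par_def[symmetric] sig_def by simp
qed

lemma allowed_src: "allowed f e \<Longrightarrow> f (src e) \<noteq> None"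
  unfolding allowed_def by auto

lemma sig_V: "sig f c u \<noteq> None \<Longrightarrow> u \<in> V"
  using par_ok[of f c u] tgtV unfolding allowed_def by metis

lemma Fs_V: "Fs c k x \<noteq> None \<Longrightarrow> x \<in> V"
  by (cases k) (use UV sig_V in \<open>auto simp: f0_def split: if_splits\<close>)

lemma Fs_P: "Fs c (Suc k) x \<noteq> None \<Longrightarrow> Fs c k (P c k x) \<noteq> None"
  unfolding P_def using par_ok allowed_src by (metis Fs.simps(2))

lemma sig_Fam: "f \<in> Fam \<Longrightarrow> sig f c \<in> Fam"
proof -
  assume f: "f \<in> Fam"
  { fix u assume s: "sig f c u \<noteq> None"
    let ?e = "par f c u"
    from par_ok[OF s] have a: "allowed f ?e" and eq: "sig f c u = Some (\<delta>1 (the (f (src ?e))) ?e)" by auto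
    from a obtain m where m: "f (src ?e) = Some m" "?e \<in> E" unfolding allowed_def by auto
    have "m \<in> M1" using f m srcV[OF m(2)] unfolding Fam_def by auto
    then have "\<delta>1 m ?e \<in> M1" using mem1 m(2) unfolding memory_def by auto
    then have "sig f c u \<in> Some ` M1" using eq m by simp }
  note * = this
  show ?thesis unfolding Fam_def
  proof (intro CollectI allI conjI impI)
    fix u
    show "sig f c u \<in> insert None (Some ` M1)"
      using *[of u] by (cases "sig f c u = None") auto
    show "u \<notin> V \<Longrightarrow> sig f c u = None" using sig_V by blast
  qed
qed

lemma f0_Fam: "f0 \<in> Fam"
proof -
  have "m1 \<in> M1" using mem1 unfolding memory_def by blast
  then show ?thesis using UV unfolding Fam_def f0_def by auto
qed

lemma Fs_Fam: "Fs c k \<in> Fam"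
proof (induction k)
  case 0
  then show ?case using f0_Fam by simp
next
  case (Suc k)
  then show ?case using sig_Fam by simp
qed

end
context gctx begin

inductive R :: "(nat \<Rightarrow> 'c) \<Rightarrow> nat \<Rightarrow> 'v \<Rightarrow> nat \<Rightarrow> 'v \<Rightarrow> bool" for c where
  base: "Fs c i u \<noteq> None \<Longrightarrow> R c i u i u"
| step: "R c i u k w \<Longrightarrow> Fs c (Suc k) x \<noteq> None \<Longrightarrow> P c k x = w \<Longrightarrow> R c i u (Suc k) x"

lemma R_F: "R c i u k w \<Longrightarrow> Fs c i u \<noteq> None \<and> Fs c k w \<noteq> None \<and> i \<le> k"
  by (induction rule: R.induct) auto

lemma R_same: "R c i u i w \<Longrightarrow> w = u"
  by (cases rule: R.cases) (auto dest: R_F)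

lemma R_anc: "Fs c k w \<noteq> None \<Longrightarrow> \<exists>u. R c 0 u k w"
proof (induction k arbitrary: w)
  case 0
  then show ?case using R.base by blast
next
  case (Suc k)
  then obtain u where "R c 0 u k (P c k w)" using Fs_P by blast
  then show ?case using R.step Suc.prems by blast
qed

lemma R_first: "R c i u k w \<Longrightarrow> i < k \<Longrightarrow>
   \<exists>x. P c i x = u \<and> Fs c (Suc i) x \<noteq> None \<and> R c (Suc i) x k w"
proof (induction rule: R.induct)
  case (base i u)
  then show ?case by simp
next
  case (step i u k w x)
  show ?case
  proof (cases "i < k")
    case True
    then obtain x' where "P c i x' = u \<and> Fs c (Suc i) x' \<noteq> None \<and> R c (Suc i) x' k w"
      using step.IH by blast
    then show ?thesis using R.step step.hyps by blast
  next
    case False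
    then have "k = i" using step.prems R_F[OF step.hyps(1)] by simp
    then have "w = u" using R_same step.hyps(1) by blast
    then show ?thesis using step.hyps \<open>k = i\<close> R.base by blast
  qed
qed

lemma R_down: "R c i u k' w \<Longrightarrow> i \<le> k \<Longrightarrow> k \<le> k' \<Longrightarrow> \<exists>w'. R c i u k w'"
proof (induction arbitrary: k rule: R.induct)
  case (base i u)
  then show ?case using R.base by (metis le_antisym)
next
  case (step i u k0 w x)
  show ?case
  proof (cases "k = Suc k0")
    case True
    then show ?thesis using R.step step.hyps by blast
  next
    case False
    then show ?thesis using step by simp
  qed
qed

definition alive :: "(nat \<Rightarrow> 'c) \<Rightarrow> nat \<Rightarrow> 'v \<Rightarrow> bool" where
  "alive c i u \<longleftrightarrow> (\<forall>k\<ge>i. \<exists>w. R c i u k w)"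

lemma alive0:
  assumes "\<And>k. \<exists>w. Fs c k w \<noteq> None"
  shows "\<exists>u. alive c 0 u"
proof -
  have "\<exists>x\<in>V. \<forall>k\<ge>0. \<exists>w. R c 0 x k w"
  proof (rule pigeon_bound[OF finV])
    fix k :: nat
    obtain w where "Fs c k w \<noteq> None" using assms by blast
    then obtain u where "R c 0 u k w" using R_anc by blast
    moreover then have "u \<in> V" using R_F Fs_V by blast
    ultimately show "\<exists>x\<in>V. \<exists>w. R c 0 x k w" by blast
  next
    fix x k k'
    assume "\<exists>w. R c 0 x k' w" "0 \<le> k" "k \<le> k'"
    then show "\<exists>w. R c 0 x k w" using R_down by blast
  qed
  then show ?thesis unfolding alive_def by blast
qed

lemma alive_step:
  assumes "alive c i u"
  shows "\<exists>x. P c i x = u \<and> Fs c (Suc i) x \<noteq> None \<and> alive c (Suc i) x"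
proof -
  have "\<exists>x\<in>V. \<forall>k\<ge>Suc i. P c i x = u \<and> Fs c (Suc i) x \<noteq> None \<and> (\<exists>w. R c (Suc i) x k w)"
  proof (rule pigeon_bound[OF finV])
    fix k :: nat
    assume k: "Suc i \<le> k"
    then obtain w where "R c i u k w" using assms unfolding alive_def by (meson Suc_leD)
    then obtain x where x: "P c i x = u \<and> Fs c (Suc i) x \<noteq> None \<and> R c (Suc i) x k w"
      using R_first k by fastforce
    then have "x \<in> V" using Fs_V by blast
    then show "\<exists>x\<in>V. P c i x = u \<and> Fs c (Suc i) x \<noteq> None \<and> (\<exists>w. R c (Suc i) x k w)"
      using x by blast
  next
    fix x k k'
    assume "P c i x = u \<and> Fs c (Suc i) x \<noteq> None \<and> (\<exists>w. R c (Suc i) x k' w)" "Suc i \<le> k" "k \<le> k'"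
    then show "P c i x = u \<and> Fs c (Suc i) x \<noteq> None \<and> (\<exists>w. R c (Suc i) x k w)"
      using R_down by blast
  qed
  then show ?thesis unfolding alive_def by blast
qed

primrec B :: "(nat \<Rightarrow> 'c) \<Rightarrow> nat \<Rightarrow> 'v" where
  "B c 0 = (SOME u. alive c 0 u)"
| "B c (Suc i) = (SOME x. P c i x = B c i \<and> Fs c (Suc i) x \<noteq> None \<and> alive c (Suc i) x)"

lemma B_alive:
  assumes "\<And>k. \<exists>w. Fs c k w \<noteq> None"
  shows "alive c i (B c i)"
proof (induction i)
  case 0
  then show ?case using alive0[OF assms] by (simp add: someI_ex)
next
  case (Suc i)
  then show ?case using someI_ex[OF alive_step[OF Suc]] by simp
qed

lemma B_props:
  assumes "\<And>k. \<exists>w. Fs c k w \<noteq> None"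
  shows "P c i (B c (Suc i)) = B c i \<and> Fs c (Suc i) (B c (Suc i)) \<noteq> None"
  using someI_ex[OF alive_step[OF B_alive[OF assms, of i]]] by simp

lemma B0: 
  assumes "\<And>k. \<exists>w. Fs c k w \<noteq> None"
  shows "B c 0 \<in> U"
proof -
  have "\<exists>w. R c 0 (B c 0) 0 w" using B_alive[OF assms, of 0] unfolding alive_def by blast
  then have "f0 (B c 0) \<noteq> None" using R_F by fastforce
  then show ?thesis unfolding f0_def by (auto split: if_splits)
qed

end
context gctx begin

definition pi :: "(nat \<Rightarrow> 'c) \<Rightarrow> nat \<Rightarrow> ('v,'c) edge" where
  "pi c i = par (Fs c i) (c i) (B c (Suc i))"

lemma pi_props:
  assumes A: "\<And>k. \<exists>w. Fs c k w \<noteq> None"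
  shows "allowed (Fs c i) (pi c i) \<and> col (pi c i) = c i \<and> tgt (pi c i) = B c (Suc i) \<and>
    src (pi c i) = B c i \<and>
    Fs c (Suc i) (B c (Suc i)) = Some (\<delta>1 (the (Fs c i (B c i))) (pi c i))"
proof -
  have bp: "P c i (B c (Suc i)) = B c i" "sig (Fs c i) (c i) (B c (Suc i)) \<noteq> None"
    using B_props[OF A, of i] by auto
  show ?thesis using par_ok[OF bp(2)] bp(1) unfolding pi_def P_def by simp
qed

lemma pi_mem:
  assumes A: "\<And>k. \<exists>w. Fs c k w \<noteq> None"
  shows "Fs c k (B c k) = Some (foldl \<delta>1 m1 (map (pi c) [0..<k]))"
proof (induction k)
  case 0
  then show ?case using B0[OF A] by (simp add: f0_def)
next
  case (Suc k)
  then show ?case using pi_props[OF A, of k] by simp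
qed

lemma pi_path:
  assumes A: "\<And>k. \<exists>w. Fs c k w \<noteq> None"
  shows "chain_from (B c 0) (map (pi c) [0..<k]) \<and> pend (B c 0) (map (pi c) [0..<k]) = B c k"
proof (induction k)
  case 0
  then show ?case by simp
next
  case (Suc k)
  then show ?case using pi_props[OF A, of k]
    by (simp add: chain_from_append pend_append)
qed

lemma pi_E:
  assumes A: "\<And>k. \<exists>w. Fs c k w \<noteq> None"
  shows "pi c i \<in> E"
  using pi_props[OF A, of i] unfolding allowed_def by blast

lemma pi_fin:
  assumes A: "\<And>k. \<exists>w. Fs c k w \<noteq> None"
  shows "fin_path V E (B c 0, map (pi c) [0..<k])"
  unfolding fin_path_def using pi_path[OF A] pi_E[OF A] B0[OF A] UV by auto

lemma pi_S1:
  assumes A: "\<And>k. \<exists>w. Fs c k w \<noteq> None" and V: "B c k \<in> V0"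
  shows "pi c k = S1 (B c 0, map (pi c) [0..<k])"
proof -
  have al: "allowed (Fs c k) (pi c k)" and s: "src (pi c k) = B c k"
    using pi_props[OF A, of k] by auto
  then obtain m where m: "Fs c k (B c k) = Some m" "pi c k = mv (B c k) m"
    using V unfolding allowed_def by auto
  have m': "m = foldl \<delta>1 m1 (map (pi c) [0..<k])" using m(1) pi_mem[OF A, of k] by simp
  have pt: "ptarget (B c 0, map (pi c) [0..<k]) = B c k" using pi_path[OF A, of k] unfolding ptarget_def by simp
  show ?thesis using mv_eq[OF pi_fin[OF A, of k]] pt V m m' by simp
qed

lemma KEY:
  assumes A: "\<And>k. \<exists>w. Fs c k w \<noteq> None"
  shows "c \<in> col_S V0 E S1 U"
proof -
  have "consistent_inf V0 E S1 (B c 0) (pi c)"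
    unfolding consistent_inf_def
  proof (intro conjI allI impI)
    fix i show "pi c i \<in> E" using pi_E[OF A] .
  next
    show "src (pi c 0) = B c 0" using pi_props[OF A, of 0] by simp
  next
    fix i show "tgt (pi c i) = src (pi c (Suc i))" using pi_props[OF A, of i] pi_props[OF A, of "Suc i"] by simp
  next
    assume "B c 0 \<in> V0" then show "pi c 0 = S1 (B c 0, [])" using pi_S1[OF A, of 0] by simp
  next
    fix i assume "tgt (pi c i) \<in> V0"
    then have "B c (Suc i) \<in> V0" using pi_props[OF A, of i] by simp
    then show "pi c (Suc i) = S1 (B c 0, map (pi c) [0..<Suc i])" using pi_S1[OF A] by blast
  qed
  moreover have "c = (\<lambda>i. col (pi c i))" using pi_props[OF A] by auto
  ultimately show ?thesis unfolding col_S_def using B0[OF A] by blast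
qed

end
context gctx begin

lemma play_pend:
  assumes "consistent_inf V0 E S v0 \<rho>"
  shows "pend v0 (map \<rho> [0..<k]) = src (\<rho> k)"
proof (induction k)
  case 0
  then show ?case using assms unfolding consistent_inf_def by simp
next
  case (Suc k)
  then show ?case using assms unfolding consistent_inf_def by (simp add: pend_append)
qed

lemma play_S:
  assumes "consistent_inf V0 E S v0 \<rho>" "src (\<rho> k) \<in> V0"
  shows "\<rho> k = S (v0, map \<rho> [0..<k])"
proof (cases k)
  case 0
  then show ?thesis using assms unfolding consistent_inf_def by auto
next
  case (Suc j)
  then show ?thesis using assms unfolding consistent_inf_def by metis
qed

lemma play_alive:
  assumes cons: "consistent_inf V0 E S v0 \<rho>" and v0: "v0 \<in> U"
    and Sg: "\<And>k. S (v0, map \<rho> [0..<k]) = g (src (\<rho> k)) (Fs (\<lambda>i. col (\<rho> i)) k)"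
  shows "Fs (\<lambda>i. col (\<rho> i)) k (src (\<rho> k)) \<noteq> None"
proof (induction k)
  case 0
  then show ?case using cons v0 unfolding consistent_inf_def by (simp add: f0_def)
next
  case (Suc k)
  let ?c = "\<lambda>i. col (\<rho> i)"
  obtain m where m: "Fs ?c k (src (\<rho> k)) = Some m" using Suc by auto
  have E: "\<rho> k \<in> E" using cons unfolding consistent_inf_def by simp
  have "src (\<rho> k) \<in> V0 \<longrightarrow> \<rho> k = mv (src (\<rho> k)) m"
  proof
    assume "src (\<rho> k) \<in> V0"
    then have "\<rho> k = S (v0, map \<rho> [0..<k])" using play_S[OF cons] by blast
    then show "\<rho> k = mv (src (\<rho> k)) m" using Sg[of k] m unfolding g_def by simp
  qed
  then have "allowed (Fs ?c k) (\<rho> k)" using E m unfolding allowed_def by blast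
  then have "sig (Fs ?c k) (?c k) (tgt (\<rho> k)) \<noteq> None" unfolding sig_def by (metis option.distinct(1))
  moreover have "tgt (\<rho> k) = src (\<rho> (Suc k))" using cons unfolding consistent_inf_def by simp
  ultimately show ?case by simp
qed

end

theorem theorem1:
  fixes C :: "'c set" and V V0 V1 :: "'v set" and E :: "('v,'c) edge set"
    and U :: "'v set" and n q :: nat
    and S1 :: "'v \<times> ('v,'c) edge list \<Rightarrow> ('v,'c) edge"
    and M1 :: "'m set" and m1 :: 'm and \<delta>1 :: "'m \<Rightarrow> ('v,'c) edge \<Rightarrow> 'm"
  assumes "arena C V V0 V1 E" and "card V = n" and "0 < n" and "0 < q"
    and "U \<subseteq> V"
    and "strategy V V0 E S1"
    and "memory E M1 m1 \<delta>1" and "card M1 = q" and "M_strategy V V0 E m1 \<delta>1 S1"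
  shows "\<exists>(S2 :: 'v \<times> ('v,'c) edge list \<Rightarrow> ('v,'c) edge) (M2 :: nat set) m2 \<delta>2.
           strategy V V0 E S2 \<and> memory E M2 m2 \<delta>2 \<and> card M2 = (q + 1) ^ n \<and>
           chromatic C E M2 \<delta>2 \<and> M_strategy V V0 E m2 \<delta>2 S2 \<and>
           col_S V0 E S2 U \<subseteq> col_S V0 E S1 U"
proof -
  interpret G: gctx C V V0 V1 E U S1 M1 m1 \<delta>1
    using assms by unfold_locales auto
  have finM1: "finite M1" using assms(7) unfolding memory_def by simp
  define BB where "BB = insert None (Some ` M1)"
  have cBB: "card BB = q + 1"
  proof -
    have "card (Some ` M1) = q" using assms(8) by (simp add: card_image)
    then show ?thesis unfolding BB_def using finM1 by simp
  qed
  have bij1: "bij_betw (\<lambda>f. \<lambda>u. if u \<in> V then f u else undefined) G.Fam (PiE V (\<lambda>_. BB))"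
  proof (rule bij_betw_byWitness[where f' = "\<lambda>h. \<lambda>u. if u \<in> V then h u else None"])
    show "\<forall>a\<in>G.Fam. (\<lambda>u. if u \<in> V then (if u \<in> V then a u else undefined) else None) = a"
      unfolding G.Fam_def by auto
    show "\<forall>a'\<in>PiE V (\<lambda>_. BB). (\<lambda>u. if u \<in> V then (if u \<in> V then a' u else None) else undefined) = a'"
      by (auto simp: PiE_def extensional_def)
    show "(\<lambda>f u. if u \<in> V then f u else undefined) ` G.Fam \<subseteq> PiE V (\<lambda>_. BB)"
      unfolding G.Fam_def BB_def by (auto simp: PiE_def extensional_def)
    show "(\<lambda>h u. if u \<in> V then h u else None) ` PiE V (\<lambda>_. BB) \<subseteq> G.Fam"
      unfolding G.Fam_def BB_def by (auto simp: PiE_def)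
  qed
  have finPi: "finite (PiE V (\<lambda>_. BB))" using G.finV finM1 unfolding BB_def by (simp add: finite_PiE)
  have cPi: "card (PiE V (\<lambda>_. BB)) = (q+1)^n" using G.finV assms(2) cBB by (simp add: card_PiE)
  have finFam: "finite G.Fam" using bij_betw_finite[OF bij1] finPi by simp
  have cFam: "card G.Fam = (q+1)^n" using bij_betw_same_card[OF bij1] cPi by simp
  define M2 where "M2 = {0..<(q+1)^n}"
  have cM2: "card M2 = (q+1)^n" unfolding M2_def by simp
  obtain enc where enc: "bij_betw enc G.Fam M2"
    using finite_same_card_bij[OF finFam, of M2] cFam cM2 unfolding M2_def by auto
  define dec where "dec = inv_into G.Fam enc"
  have decenc: "\<And>f. f \<in> G.Fam \<Longrightarrow> dec (enc f) = f"
    unfolding dec_def using enc by (simp add: bij_betw_def inv_into_f_f)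
  have decM: "\<And>k. k \<in> M2 \<Longrightarrow> dec k \<in> G.Fam"
    unfolding dec_def using enc by (metis bij_betw_def inv_into_into)
  have encM: "\<And>f. f \<in> G.Fam \<Longrightarrow> enc f \<in> M2" using enc bij_betwE by blast
  define \<sigma>2 where "\<sigma>2 = (\<lambda>k c. enc (G.sig (dec k) c))"
  define \<delta>2 :: "nat \<Rightarrow> ('v,'c) edge \<Rightarrow> nat" where "\<delta>2 = (\<lambda>k e. \<sigma>2 k (col e))"
  define m2 where "m2 = enc G.f0"
  define S2 where "S2 = (\<lambda>p. G.g (ptarget p) (dec (foldl \<delta>2 m2 (snd p))))"
  have \<sigma>2M: "\<And>k c. k \<in> M2 \<Longrightarrow> \<sigma>2 k c \<in> M2"
    unfolding \<sigma>2_def using decM G.sig_Fam encM by blast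
  have "strategy V V0 E S2"
    unfolding strategy_def S2_def using G.g_valid by blast
  moreover have "memory E M2 m2 \<delta>2"
    unfolding memory_def using \<sigma>2M encM G.f0_Fam unfolding M2_def m2_def \<delta>2_def by auto
  moreover have "chromatic C E M2 \<delta>2"
    unfolding chromatic_def \<delta>2_def using \<sigma>2M by (intro exI[of _ \<sigma>2]) blast
  moreover have "M_strategy V V0 E m2 \<delta>2 S2"
    unfolding M_strategy_def S2_def by simp
  moreover have "col_S V0 E S2 U \<subseteq> col_S V0 E S1 U"
  proof
    fix x assume "x \<in> col_S V0 E S2 U"
    then obtain v0 \<rho> where v0: "v0 \<in> U" and cons: "consistent_inf V0 E S2 v0 \<rho>"
      and x: "x = (\<lambda>i. col (\<rho> i))" unfolding col_S_def by blast
    let ?c = "\<lambda>i. col (\<rho> i)"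
    have fold: "foldl \<delta>2 m2 (map \<rho> [0..<k]) = enc (G.Fs ?c k)" for k
    proof (induction k)
      case 0
      then show ?case by (simp add: m2_def)
    next
      case (Suc k)
      then show ?case using decenc[OF G.Fs_Fam] by (simp add: \<delta>2_def \<sigma>2_def)
    qed
    have Sg: "S2 (v0, map \<rho> [0..<k]) = G.g (src (\<rho> k)) (G.Fs ?c k)" for k
      unfolding S2_def ptarget_def using G.play_pend[OF cons, of k] fold[of k] decenc[OF G.Fs_Fam]
      by simp
    have "\<And>k. \<exists>w. G.Fs ?c k w \<noteq> None" using G.play_alive[OF cons v0 Sg] by blast
    then show "x \<in> col_S V0 E S1 U" using G.KEY x by blast
  qed
  ultimately show ?thesis using cM2 by blast
qed

end
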